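(* Let $k\ge 2$ and let $s_k$ and $w_k$ be as in the context. Consider the SLP obtained after the first $k-1$ rounds of $\mathsf{RePair}$ on input $s_k$. Its rules other than the start rule are $X_1\to aa$ and $X_i\to X_{i-1}X_{i-1}$ for $2\le i\le k-1$. Its start rule is $S\to u_1bu_2b\cdots u_{k-1}bu_k$. For each $1\le i\le k$, we have $u_i=X_{k-1}^{q_i}v_i$, where $q_i=\lfloor N_i/2^{k-1}\rfloor$ and $N_i$ is the integer with binary representation $w_k[1:k+i]$; in particular $q_i\ge2$. The word $v_i$ is $$v_i=f_{k-2}(w_k[i+2])f_{k-3}(w_k[i+3])\cdots f_1(w_k[k+i-1])f_0(w_k[k+i]),$$ with $f_0(1)=a$, $f_0(0)=\varepsilon$, and for $j\ge1$, $f_j(1)=X_j$, $f_j(0)=\varepsilon$. In particular, in these first $k-1$ rounds the selected strings never contain the letter $b$.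
   Context: All logarithms are to base 2. A straight-line program (SLP) is a context-free grammar with exactly one production $A\to u$, $u$ a nonempty word over nonterminals and terminals, per nonterminal, with acyclic dependencies, so that it derives a single word. For an SLP, a word $\gamma$ over terminals and nonterminals is a maximal string if $|\gamma|\ge2$, $\gamma$ occurs at least twice without overlap in the right-hand sides, and no strictly longer word occurs at least as many times without overlap in the right-hand sides. $\mathsf{RePair}$ on input $w$ starts with the single rule $S\to w$. In each round it selects a maximal string $\gamma$ with the largest number of non-overlapping occurrences, replaces a largest set of pairwise non-overlapping occurrences of $\gamma$ (chosen from left to right) in the right-hand sides by a fresh nonterminal $X$, and adds $X\to\gamma$. It stops when no maximal string exists. For $k\ge2$, fix a binary de Bruijn sequence $B\in\{0,1\}^*$ of order $\lceil\log k\rceil$ that starts with $1$. It has length $2^{\lceil\log k\rceil}$, and each word of length $\lceil\log k\rceil$ occurs at most once as a factor of $B$. Let $h$ be the homomorphism with $h(0)=01$, $h(1)=10$. Put $w_k=h(B[1:k])$, a binary word of length $2k$ with $w_k[1]=1$. Define $$s_k=a^{w_k[1:k+1]}\,b\,a^{w_k[1:k+2]}\,b\cdots a^{w_k[1:2k-1]}\,b\,a^{w_k},$$ where each prefix $w_k[1:k+i]$ is read as a binary number giving the exponent. Here $w[i:j]$ denotes the factor from position $i$ to position $j$. *)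

theory Defs
  imports Complex_Main
begin

(* Symbols of the SLP: terminals a, b and nonterminals NT n.
   NT 0 is the start symbol S; the nonterminal created in round r of RePair is NT r. *)
datatype sym = Ta | Tb | NT nat

(* An SLP state is a list of right-hand sides: element 0 is the rhs of the start rule S = NT 0,
   element r (r \<ge> 1) is the rhs of NT r. *)
type_synonym slp = "sym list list"

definition occ_pos :: "sym list \<Rightarrow> sym list \<Rightarrow> nat set" where
  "occ_pos \<gamma> u = {i. i + length \<gamma> \<le> length u \<and> take (length \<gamma>) (drop i u) = \<gamma>}"

definition nocc :: "sym list \<Rightarrow> sym list \<Rightarrow> nat" where
  "nocc \<gamma> u = Max {card P | P. P \<subseteq> occ_pos \<gamma> u \<and>
       (\<forall>i\<in>P. \<forall>j\<in>P. i < j \<longrightarrow> i + length \<gamma> \<le> j)}"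

definition total_occ :: "slp \<Rightarrow> sym list \<Rightarrow> nat" where
  "total_occ G \<gamma> = sum_list (map (nocc \<gamma>) G)"

definition maximal_string :: "slp \<Rightarrow> sym list \<Rightarrow> bool" where
  "maximal_string G \<gamma> \<longleftrightarrow> length \<gamma> \<ge> 2 \<and> total_occ G \<gamma> \<ge> 2 \<and>
     \<not> (\<exists>\<delta>. length \<delta> > length \<gamma> \<and> total_occ G \<delta> \<ge> total_occ G \<gamma>)"

fun repl :: "sym list \<Rightarrow> sym \<Rightarrow> sym list \<Rightarrow> sym list" where
  "repl \<gamma> X [] = []"
| "repl \<gamma> X (c # u) =
     (if \<gamma> \<noteq> [] \<and> take (length \<gamma>) (c # u) = \<gamma>
      then X # repl \<gamma> X (drop (length \<gamma> - 1) u)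
      else c # repl \<gamma> X u)"

definition repair_step :: "slp \<Rightarrow> slp \<Rightarrow> bool" where
  "repair_step G G' \<longleftrightarrow> (\<exists>\<gamma>. maximal_string G \<gamma> \<and>
      (\<forall>\<delta>. maximal_string G \<delta> \<longrightarrow> total_occ G \<delta> \<le> total_occ G \<gamma>) \<and>
      G' = map (repl \<gamma> (NT (length G))) G @ [\<gamma>])"

definition bin_val :: "bool list \<Rightarrow> nat" where
  "bin_val xs = foldl (\<lambda>n b. 2 * n + (if b then 1 else 0)) 0 xs"

definition hmor :: "bool list \<Rightarrow> bool list" where
  "hmor xs = concat (map (\<lambda>b. if b then [True, False] else [False, True]) xs)"

definition de_bruijn_seq :: "nat \<Rightarrow> bool list \<Rightarrow> bool" where
  "de_bruijn_seq m B \<longleftrightarrow> length B = 2 ^ m \<and> B \<noteq> [] \<and> hd B = True \<and>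
     (\<forall>i j. i + m \<le> length B \<and> j + m \<le> length B \<and>
            take m (drop i B) = take m (drop j B) \<longrightarrow> i = j)"

definition w_word :: "nat \<Rightarrow> bool list \<Rightarrow> bool list" where
  "w_word k B = hmor (take k B)"

definition Nval :: "nat \<Rightarrow> bool list \<Rightarrow> nat \<Rightarrow> nat" where
  "Nval k B i = bin_val (take (k + i) (w_word k B))"

definition s_word :: "nat \<Rightarrow> bool list \<Rightarrow> sym list" where
  "s_word k B = replicate (Nval k B 1) Ta @
     concat (map (\<lambda>i. Tb # replicate (Nval k B i) Ta) [2..<k+1])"

definition qval :: "nat \<Rightarrow> bool list \<Rightarrow> nat \<Rightarrow> nat" where
  "qval k B i = Nval k B i div 2 ^ (k - 1)"

definition fsym :: "nat \<Rightarrow> bool \<Rightarrow> sym list" where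
  "fsym j c = (if c then (if j = 0 then [Ta] else [NT j]) else [])"

(* v_i = f_{k-2}(w[i+2]) ... f_0(w[k+i]) (1-based positions of w) *)
definition vword :: "nat \<Rightarrow> bool list \<Rightarrow> nat \<Rightarrow> sym list" where
  "vword k B i = concat (map (\<lambda>p. fsym (k + i - p) (w_word k B ! (p - 1))) [i+2..<k+i+1])"

definition uword :: "nat \<Rightarrow> bool list \<Rightarrow> nat \<Rightarrow> sym list" where
  "uword k B i = replicate (qval k B i) (NT (k - 1)) @ vword k B i"

definition expected_slp :: "nat \<Rightarrow> bool list \<Rightarrow> slp" where
  "expected_slp k B =
     (uword k B 1 @ concat (map (\<lambda>i. Tb # uword k B i) [2..<k+1]))
     # [Ta, Ta] # map (\<lambda>i. [NT (i - 1), NT (i - 1)]) [2..<k]"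

end

theory Submission
  imports Defs
begin



definition good :: "sym list \<Rightarrow> sym list \<Rightarrow> nat set \<Rightarrow> bool" where
  "good \<gamma> u P \<longleftrightarrow> P \<subseteq> occ_pos \<gamma> u \<and> (\<forall>i\<in>P. \<forall>j\<in>P. i < j \<longrightarrow> i + length \<gamma> \<le> j)"

lemma occ_pos_finite: "finite (occ_pos \<gamma> u)"
  by (rule finite_subset[of _ "{..length u}"]) (auto simp: occ_pos_def)

lemma nocc_set_finite: "finite {card P | P. P \<subseteq> occ_pos \<gamma> u \<and>
       (\<forall>i\<in>P. \<forall>j\<in>P. i < j \<longrightarrow> i + length \<gamma> \<le> j)}"
proof -
  have "{card P | P. P \<subseteq> occ_pos \<gamma> u \<and>
       (\<forall>i\<in>P. \<forall>j\<in>P. i < j \<longrightarrow> i + length \<gamma> \<le> j)} \<subseteq> card ` Pow (occ_pos \<gamma> u)" by blast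
  then show ?thesis using occ_pos_finite by (meson finite_Pow_iff finite_imageI finite_subset)
qed

lemma nocc_ge: "good \<gamma> u P \<Longrightarrow> card P \<le> nocc \<gamma> u"
  unfolding nocc_def good_def
  by (rule Max_ge[OF nocc_set_finite]) blast

lemma nocc_obtain: "\<exists>P. good \<gamma> u P \<and> card P = nocc \<gamma> u"
proof -
  have z: "card {} \<in> {card P | P. P \<subseteq> occ_pos \<gamma> u \<and>
       (\<forall>i\<in>P. \<forall>j\<in>P. i < j \<longrightarrow> i + length \<gamma> \<le> j)}"
    by (simp only: mem_Collect_eq) (rule exI[of _ "{}"], simp)
  have ne: "{card P | P. P \<subseteq> occ_pos \<gamma> u \<and>
       (\<forall>i\<in>P. \<forall>j\<in>P. i < j \<longrightarrow> i + length \<gamma> \<le> j)} \<noteq> {}" using z by (metis empty_iff)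
  have "nocc \<gamma> u \<in> {card P | P. P \<subseteq> occ_pos \<gamma> u \<and>
       (\<forall>i\<in>P. \<forall>j\<in>P. i < j \<longrightarrow> i + length \<gamma> \<le> j)}"
    unfolding nocc_def by (rule Max_in[OF nocc_set_finite ne])
  then obtain P where P: "nocc \<gamma> u = card P" "P \<subseteq> occ_pos \<gamma> u"
     "\<forall>i\<in>P. \<forall>j\<in>P. i < j \<longrightarrow> i + length \<gamma> \<le> j"
    unfolding mem_Collect_eq by (elim exE conjE) 
  then have "good \<gamma> u P" unfolding good_def by (intro conjI)
  then show ?thesis using P(1) by (intro exI[of _ P]) simp
qed

lemma good_finite: "good \<gamma> u P \<Longrightarrow> finite P"
  unfolding good_def using occ_pos_finite finite_subset by blast

lemma occ_nth: "i \<in> occ_pos \<gamma> u \<Longrightarrow> p < length \<gamma> \<Longrightarrow> u ! (i + p) = \<gamma> ! p"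
proof -
  assume a: "i \<in> occ_pos \<gamma> u" "p < length \<gamma>"
  then have "take (length \<gamma>) (drop i u) ! p = \<gamma> ! p" by (simp add: occ_pos_def)
  then show ?thesis using a by (simp add: occ_pos_def)
qed

lemma count_bound:
  assumes g: "good \<gamma> u P"
  shows "card P * count_list \<gamma> y \<le> count_list u y"
proof -
  define A where "A i = (\<lambda>p. i + p) ` {p. p < length \<gamma> \<and> \<gamma> ! p = y}" for i
  have fin: "finite P" using good_finite[OF g] .
  have cA: "card (A i) = count_list \<gamma> y" for i
    unfolding A_def count_list_eq_length_filter length_filter_conv_card
    by (subst card_image) (auto simp: inj_on_def eq_commute)
  have disj: "\<forall>i\<in>P. \<forall>j\<in>P. i \<noteq> j \<longrightarrow> A i \<inter> A j = {}"
  proof (intro ballI impI)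
    fix i j assume ij: "i \<in> P" "j \<in> P" "i \<noteq> j"
    then have "i + length \<gamma> \<le> j \<or> j + length \<gamma> \<le> i" using g unfolding good_def
      by (metis linorder_neqE_nat)
    then show "A i \<inter> A j = {}" unfolding A_def by auto
  qed
  have "card (\<Union>i\<in>P. A i) = (\<Sum>i\<in>P. card (A i))"
    by (rule card_UN_disjoint) (use fin disj in \<open>auto simp: A_def\<close>)
  also have "\<dots> = card P * count_list \<gamma> y" by (simp add: cA)
  finally have e: "card (\<Union>i\<in>P. A i) = card P * count_list \<gamma> y" .
  have sub: "(\<Union>i\<in>P. A i) \<subseteq> {p. p < length u \<and> u ! p = y}"
  proof
    fix x assume "x \<in> (\<Union>i\<in>P. A i)"
    then obtain i p where ip: "i \<in> P" "p < length \<gamma>" "\<gamma> ! p = y" "x = i + p" unfolding A_def by auto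
    have occ: "i \<in> occ_pos \<gamma> u" using ip g unfolding good_def by auto
    then have "i + length \<gamma> \<le> length u" by (simp add: occ_pos_def)
    then show "x \<in> {p. p < length u \<and> u ! p = y}" using occ_nth[OF occ ip(2)] ip by auto
  qed
  have "card (\<Union>i\<in>P. A i) \<le> card {p. p < length u \<and> u ! p = y}"
    by (rule card_mono[OF _ sub]) auto
  also have "\<dots> = count_list u y"
    unfolding count_list_eq_length_filter length_filter_conv_card by (simp add: eq_commute)
  finally show ?thesis using e by simp
qed

lemma nocc_count: "nocc \<gamma> u * count_list \<gamma> y \<le> count_list u y"
  using nocc_obtain[of \<gamma> u] count_bound by metis

lemma nocc_superadd:
  assumes ne: "\<gamma> \<noteq> []"
  shows "nocc \<gamma> u + nocc \<gamma> w \<le> nocc \<gamma> (u @ w)"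
proof -
  obtain P1 where P1: "good \<gamma> u P1" "card P1 = nocc \<gamma> u" using nocc_obtain by blast
  obtain P2 where P2: "good \<gamma> w P2" "card P2 = nocc \<gamma> w" using nocc_obtain by blast
  define P where "P = P1 \<union> (\<lambda>j. length u + j) ` P2"
  have o1: "i \<in> P1 \<Longrightarrow> i + length \<gamma> \<le> length u \<and> take (length \<gamma>) (drop i u) = \<gamma>" for i
    using P1 unfolding good_def occ_pos_def by auto
  have o2: "j \<in> P2 \<Longrightarrow> j + length \<gamma> \<le> length w \<and> take (length \<gamma>) (drop j w) = \<gamma>" for j
    using P2 unfolding good_def occ_pos_def by auto
  have lt: "i < length u" if "i \<in> P1" for i
  proof -
    have "i + length \<gamma> \<le> length u" using o1 that by blast
    moreover have "length \<gamma> > 0" using ne by simp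
    ultimately show ?thesis by linarith
  qed
  have "good \<gamma> (u @ w) P"
    unfolding good_def P_def
  proof (intro conjI)
    show "P1 \<union> (\<lambda>j. length u + j) ` P2 \<subseteq> occ_pos \<gamma> (u @ w)"
    proof
      fix x assume "x \<in> P1 \<union> (\<lambda>j. length u + j) ` P2"
      then show "x \<in> occ_pos \<gamma> (u @ w)"
      proof
        assume "x \<in> P1" then show ?thesis using o1[of x] by (auto simp: occ_pos_def)
      next
        assume "x \<in> (\<lambda>j. length u + j) ` P2"
        then obtain j where "j \<in> P2" "x = length u + j" by auto
        then show ?thesis using o2[of j] by (auto simp: occ_pos_def)
      qed
    qed
    show "\<forall>i\<in>P1 \<union> (\<lambda>j. length u + j) ` P2. \<forall>j\<in>P1 \<union> (\<lambda>j. length u + j) ` P2. i < j \<longrightarrow> i + length \<gamma> \<le> j"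
    proof (intro ballI impI)
      fix i j assume i: "i \<in> P1 \<union> (\<lambda>j. length u + j) ` P2" and j: "j \<in> P1 \<union> (\<lambda>j. length u + j) ` P2" and ij: "i < j"
      show "i + length \<gamma> \<le> j"
      proof (cases "i \<in> P1")
        case iP: True
        show ?thesis
        proof (cases "j \<in> P1")
          case True then show ?thesis using iP ij P1(1) unfolding good_def by blast
        next
          case False then have "j \<ge> length u" using j by auto
          then show ?thesis using o1[OF iP] by linarith
        qed
      next
        case False
        then obtain i' where i': "i' \<in> P2" "i = length u + i'" using i by auto
        have "j \<notin> P1" using lt ij i' by fastforce
        then obtain j' where j': "j' \<in> P2" "j = length u + j'" using j by auto
        have "i' + length \<gamma> \<le> j'" using P2(1) i' j' ij unfolding good_def by auto
        then show ?thesis using i' j' by simp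
      qed
    qed
  qed
  then have "card P \<le> nocc \<gamma> (u @ w)" by (rule nocc_ge)
  moreover have "card P = card P1 + card P2"
    unfolding P_def
  proof (subst card_Un_disjoint)
    show "finite P1" using good_finite[OF P1(1)] .
    show "finite ((\<lambda>j. length u + j) ` P2)" using good_finite[OF P2(1)] by simp
    show "P1 \<inter> (\<lambda>j. length u + j) ` P2 = {}" using lt by fastforce
    show "card P1 + card ((\<lambda>j. length u + j) ` P2) = card P1 + card P2"
      by (simp add: card_image inj_on_def)
  qed
  ultimately show ?thesis using P1 P2 by simp
qed

lemma nocc_pair: "1 \<le> nocc [x, x] [x, x]"
proof -
  have "good [x,x] [x,x] {0}" by (auto simp: good_def occ_pos_def)
  from nocc_ge[OF this] show ?thesis by simp
qed

lemma nocc_rep: "q div 2 \<le> nocc [x, x] (replicate q x)"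
proof (induction q rule: nat_less_induct)
  case (1 q)
  show ?case
  proof (cases "q < 2")
    case True then show ?thesis by simp
  next
    case False
    then obtain r where q: "q = Suc (Suc r)" by (metis less_2_cases_iff not0_implies_Suc not_less)
    have "replicate q x = [x,x] @ replicate r x" by (simp add: q)
    then have "nocc [x,x] [x,x] + nocc [x,x] (replicate r x) \<le> nocc [x,x] (replicate q x)"
      using nocc_superadd[of "[x,x]" "[x,x]" "replicate r x"] by simp
    moreover have "r div 2 \<le> nocc [x,x] (replicate r x)" using 1 q by simp
    ultimately show ?thesis using nocc_pair[of x] q by simp
  qed
qed




lemma repl_nox: "x \<notin> set u \<Longrightarrow> repl [x, x] Y u = u"
  by (induction u) auto

lemma repl_app_nox: "x \<notin> set v \<Longrightarrow> repl [x, x] Y (v @ r) = v @ repl [x, x] Y r"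
  by (induction v) auto

lemma repl_rep:
  assumes "r = [] \<or> hd r \<noteq> x"
  shows "repl [x, x] Y (replicate q x @ r) = replicate (q div 2) Y @ replicate (q mod 2) x @ repl [x, x] Y r"
proof (induction q rule: nat_less_induct)
  case (1 q)
  show ?case
  proof (cases q)
    case 0 then show ?thesis by simp
  next
    case (Suc p)
    show ?thesis
    proof (cases p)
      case 0
      then show ?thesis using Suc assms by (cases r) auto
    next
      case (Suc m)
      have "repl [x, x] Y (replicate q x @ r) = Y # repl [x, x] Y (replicate m x @ r)"
        using \<open>q = Suc p\<close> Suc by simp
      also have "\<dots> = Y # replicate (m div 2) Y @ replicate (m mod 2) x @ repl [x, x] Y r"
        using 1 \<open>q = Suc p\<close> Suc by simp
      finally show ?thesis using \<open>q = Suc p\<close> Suc by simp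
    qed
  qed
qed

lemma repl_seg:
  assumes "x \<notin> set v" "r = [] \<or> hd r \<noteq> x"
  shows "repl [x, x] Y (replicate q x @ v @ r) = replicate (q div 2) Y @ replicate (q mod 2) x @ v @ repl [x, x] Y r"
proof (cases v)
  case Nil then show ?thesis using repl_rep[OF assms(2)] by simp
next
  case (Cons c v')
  then have "c \<noteq> x" using assms by auto
  then have "repl [x, x] Y (replicate q x @ v @ r) = replicate (q div 2) Y @ replicate (q mod 2) x @ repl [x, x] Y (v @ r)"
    using repl_rep[of "v @ r" x Y q] Cons by simp
  then show ?thesis using repl_app_nox[OF assms(1)] by simp
qed

lemma repl_segs:
  assumes nx: "x \<noteq> Tb" and seg: "\<And>i. seg i = replicate (q i) x @ v i" "\<And>i. x \<notin> set (v i)"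
  shows "repl [x, x] Y (concat (map (\<lambda>i. Tb # seg i) js)) =
         concat (map (\<lambda>i. Tb # replicate (q i div 2) Y @ replicate (q i mod 2) x @ v i) js)"
proof (induction js)
  case Nil then show ?case by simp
next
  case (Cons a js)
  have h: "concat (map (\<lambda>i. Tb # seg i) js) = [] \<or> hd (concat (map (\<lambda>i. Tb # seg i) js)) \<noteq> x"
    using nx by (cases js) auto
  have "repl [x, x] Y (concat (map (\<lambda>i. Tb # seg i) (a # js))) =
        Tb # repl [x, x] Y (replicate (q a) x @ v a @ concat (map (\<lambda>i. Tb # seg i) js))"
    using nx seg(1)[of a] by simp
  also have "\<dots> = Tb # replicate (q a div 2) Y @ replicate (q a mod 2) x @ v a @ repl [x,x] Y (concat (map (\<lambda>i. Tb # seg i) js))"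
    using repl_seg[OF seg(2) h] by simp
  finally show ?case using Cons by simp
qed

lemma repl_S:
  assumes nx: "x \<noteq> Tb" and seg: "\<And>i. seg i = replicate (q i) x @ v i" "\<And>i. x \<notin> set (v i)"
  shows "repl [x, x] Y (seg 1 @ concat (map (\<lambda>i. Tb # seg i) js)) =
         (replicate (q 1 div 2) Y @ replicate (q 1 mod 2) x @ v 1) @
         concat (map (\<lambda>i. Tb # replicate (q i div 2) Y @ replicate (q i mod 2) x @ v i) js)"
proof -
  have h: "concat (map (\<lambda>i. Tb # seg i) js) = [] \<or> hd (concat (map (\<lambda>i. Tb # seg i) js)) \<noteq> x"
    using nx by (cases js) auto
  show ?thesis using repl_seg[OF seg(2) h, of Y "q 1"] seg(1)[of 1] repl_segs[OF assms] by simp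
qed




definition Xs :: "nat \<Rightarrow> sym" where "Xs j = (if j = 0 then Ta else NT j)"
definition tailw :: "(nat \<Rightarrow> nat) \<Rightarrow> nat \<Rightarrow> nat \<Rightarrow> sym list" where
  "tailw N t i = concat (map (\<lambda>j. fsym j (odd (N i div 2 ^ j))) (rev [0..<t]))"
definition useg :: "(nat \<Rightarrow> nat) \<Rightarrow> nat \<Rightarrow> nat \<Rightarrow> sym list" where
  "useg N t i = replicate (N i div 2 ^ t) (Xs t) @ tailw N t i"
definition St :: "(nat \<Rightarrow> nat) \<Rightarrow> nat \<Rightarrow> nat \<Rightarrow> sym list" where
  "St N k t = useg N t 1 @ concat (map (\<lambda>i. Tb # useg N t i) [2..<k+1])"
definition rules :: "nat \<Rightarrow> sym list list" where
  "rules t = map (\<lambda>j. [Xs (j - 1), Xs (j - 1)]) [1..<t+1]"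
definition Gt :: "(nat \<Rightarrow> nat) \<Rightarrow> nat \<Rightarrow> nat \<Rightarrow> slp" where
  "Gt N k t = St N k t # rules t"

lemma Xs_eq[simp]: "Xs j = Xs t \<longleftrightarrow> j = t"
  by (auto simp: Xs_def)
lemma Xs_Tb[simp]: "Xs t \<noteq> Tb" "Tb \<noteq> Xs t"
  by (auto simp: Xs_def)

lemma fsym_set: "set (fsym j c) \<subseteq> {Xs j}"
  by (auto simp: fsym_def Xs_def)
lemma fsym_len: "length (fsym j c) \<le> 1"
  by (auto simp: fsym_def)

lemma tail_nox: "Xs t \<notin> set (tailw N t i)"
proof
  assume "Xs t \<in> set (tailw N t i)"
  then obtain j where j: "j < t" "Xs t \<in> set (fsym j (odd (N i div 2 ^ j)))"
    unfolding tailw_def by auto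
  then have "Xs t = Xs j" using fsym_set by blast
  then show False using j(1) by simp
qed

lemma concat_len_le: "(\<And>x. length (f x) \<le> 1) \<Longrightarrow> length (concat (map f xs)) \<le> length xs"
proof (induction xs)
  case Nil then show ?case by simp
next
  case (Cons a xs)
  have "length (f a) \<le> 1" using Cons.prems .
  moreover have "length (concat (map f xs)) \<le> length xs" using Cons.IH Cons.prems by blast
  ultimately show ?case by simp
qed

lemma tail_len: "length (tailw N t i) \<le> t"
proof -
  have "length (tailw N t i) \<le> length (rev [0..<t])"
    unfolding tailw_def by (rule concat_len_le) (rule fsym_len)
  then show ?thesis by simp
qed

lemma tail_Suc: "tailw N (Suc t) i = fsym t (odd (N i div 2 ^ t)) @ tailw N t i"
  by (simp add: tailw_def)

lemma rep_mod_fsym: "replicate (q mod 2) (Xs t) = fsym t (odd q)"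
  by (auto simp: fsym_def Xs_def odd_iff_mod_2_eq_one even_iff_mod_2_eq_zero)

lemma length_Gt: "length (Gt N k t) = Suc t"
  by (simp add: Gt_def rules_def)

lemma step_Gt:
  "map (repl [Xs t, Xs t] (NT (length (Gt N k t)))) (Gt N k t) @ [[Xs t, Xs t]] = Gt N k (Suc t)"
proof -
  have Y: "NT (length (Gt N k t)) = Xs (Suc t)" by (simp add: length_Gt Xs_def)
  have r: "map (repl [Xs t, Xs t] Y) (rules t) = rules t" for Y
    unfolding rules_def by (auto intro!: repl_nox)
  have rs: "rules (Suc t) = rules t @ [[Xs t, Xs t]]" by (simp add: rules_def)
  have dv: "N i div 2 ^ t div 2 = N i div 2 ^ Suc t" for i by (metis div_mult2_eq power_Suc2)
  have s: "repl [Xs t, Xs t] (Xs (Suc t)) (St N k t) = St N k (Suc t)"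
    unfolding St_def
    apply (subst repl_S[where q = "\<lambda>i. N i div 2 ^ t" and v = "tailw N t"])
    apply (simp_all add: useg_def tail_nox)
    apply (simp add: rep_mod_fsym dv tail_Suc)
    done
  have "map (repl [Xs t, Xs t] (Xs (Suc t))) (Gt N k t) @ [[Xs t, Xs t]]
      = repl [Xs t, Xs t] (Xs (Suc t)) (St N k t) # (map (repl [Xs t, Xs t] (Xs (Suc t))) (rules t) @ [[Xs t, Xs t]])"
    unfolding Gt_def by simp
  also have "\<dots> = Gt N k (Suc t)" unfolding s r rs Gt_def ..
  finally show ?thesis unfolding Y .
qed




lemma count_segs: "x \<noteq> Tb \<Longrightarrow> count_list (concat (map (\<lambda>i. Tb # seg i) js)) x = sum_list (map (\<lambda>i. count_list (seg i) x) js)"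
  by (induction js) auto

lemma length_segs: "length (concat (map (\<lambda>i. Tb # seg i) js)) = sum_list (map (\<lambda>i. Suc (length (seg i))) js)"
  by (induction js) auto

lemma sum_list_le_c: "(\<And>i. f i \<le> g i + c) \<Longrightarrow> sum_list (map f js) \<le> sum_list (map g js) + length js * c"
proof (induction js)
  case Nil then show ?case by simp
next
  case (Cons a js)
  have "f a \<le> g a + c" using Cons.prems .
  moreover have "sum_list (map f js) \<le> sum_list (map g js) + length js * c" using Cons by blast
  ultimately show ?case by simp
qed

lemma count_two: "y \<noteq> x \<Longrightarrow> count_list u y + count_list u x \<le> length u"
  by (induction u) auto

lemma nocc_segs: "nocc [x, x] (concat (map (\<lambda>i. Tb # seg i) js)) \<ge> sum_list (map (\<lambda>i. nocc [x, x] (seg i)) js)"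
proof (induction js)
  case Nil then show ?case by simp
next
  case (Cons a js)
  have "nocc [x,x] ([Tb] @ seg a) + nocc [x,x] (concat (map (\<lambda>i. Tb # seg i) js))
     \<le> nocc [x,x] (([Tb] @ seg a) @ concat (map (\<lambda>i. Tb # seg i) js))"
    by (rule nocc_superadd) simp
  moreover have "nocc [x,x] [Tb] + nocc [x,x] (seg a) \<le> nocc [x,x] ([Tb] @ seg a)"
    by (rule nocc_superadd) simp
  ultimately show ?case using Cons.IH by simp
qed

lemma nocc_seg_lb: "N i div 2 ^ t div 2 \<le> nocc [Xs t, Xs t] (useg N t i)"
proof -
  have "nocc [Xs t, Xs t] (replicate (N i div 2 ^ t) (Xs t)) + nocc [Xs t, Xs t] (tailw N t i) \<le> nocc [Xs t, Xs t] (useg N t i)"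
    unfolding useg_def by (rule nocc_superadd) simp
  then show ?thesis using nocc_rep[of "N i div 2 ^ t" "Xs t"] by simp
qed

lemma count_rep[simp]: "count_list (replicate n x) x = n"
  by (induction n) auto

lemma count_X_seg: "count_list (useg N t i) (Xs t) = N i div 2 ^ t"
  using tail_nox[of t N i] by (simp add: useg_def count_list_0_iff)

lemma len_seg: "length (useg N t i) \<le> count_list (useg N t i) (Xs t) + t"
  using tail_len[of N t i] tail_nox[of t N i] by (simp add: useg_def count_list_0_iff)

lemma tot_count: "sum_list (map (nocc \<delta>) G) * count_list \<delta> y \<le> sum_list (map (\<lambda>u. count_list u y) G)"
proof (induction G)
  case Nil then show ?case by simp
next
  case (Cons a G)
  then show ?case using nocc_count[of \<delta> a y] by (simp add: add_mult_distrib)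
qed

lemma sum_count_le_len: "sum_list (map (\<lambda>u. count_list u y) G) \<le> sum_list (map length G)"
proof (induction G)
  case Nil then show ?case by simp
next
  case (Cons a G) then show ?case using count_le_length[of a y] by simp
qed

lemma rules_len: "sum_list (map length (rules t)) = 2 * t"
proof -
  have "map length (rules t) = replicate t 2" unfolding rules_def
    by (simp add: map_replicate_const comp_def)
  then show ?thesis by (simp add: sum_list_replicate)
qed

lemma rules_X: "sum_list (map (\<lambda>u. count_list u (Xs t)) (rules t)) = 0"
proof -
  have "\<forall>u\<in>set (rules t). count_list u (Xs t) = 0" unfolding rules_def by auto
  then show ?thesis by (simp add: sum_list_eq_0_iff)
qed

lemma pow_bound: "k \<ge> 2 \<Longrightarrow> k * k + k < 2 ^ k + (5::nat)"
proof (induction k rule: nat_induct_at_least)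
  case base then show ?case by simp
next
  case (Suc n)
  show ?case
  proof (cases "n = 2")
    case True then show ?thesis by simp
  next
    case False
    then have "n \<ge> 3" using Suc by simp
    have "2 * n + 2 \<le> 2 ^ n"
    proof -
      have "n * n + n < 2 ^ n + 5" by (rule Suc.IH)
      have "3 * n \<le> n * n" using \<open>n \<ge> 3\<close> by simp
      then show ?thesis using \<open>n * n + n < 2 ^ n + 5\<close> \<open>n \<ge> 3\<close> by linarith
    qed
    then show ?thesis using Suc.IH by simp
  qed
qed

lemma sum_div2: "sum_list (map q js) \<le> 2 * sum_list (map (\<lambda>i. q i div 2) js) + length js"
  by (induction js) auto

lemma member_le_sum: "a \<in> set js \<Longrightarrow> (f a :: nat) \<le> sum_list (map f js)"
  by (induction js) auto




lemma three_k: "k \<ge> 1 \<Longrightarrow> 3 * k < 2 ^ (k + 1)"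
proof (induction k rule: nat_induct_at_least)
  case base then show ?case by simp
next
  case (Suc n)
  have "2 ^ (Suc n + 1) = 2 * (2::nat) ^ (n + 1)" by simp
  moreover have "3 * Suc n = 3 * n + 3" by simp
  ultimately show ?case using Suc.IH Suc.hyps by linarith
qed

lemma key:
  assumes k2: "k \<ge> 2" and tk: "t + 2 \<le> k" and Nk: "N k \<ge> 2 ^ (2 * k - 1)"
  shows "2 \<le> total_occ (Gt N k t) [Xs t, Xs t] \<and>
    (\<forall>\<delta>. length \<delta> \<ge> 2 \<longrightarrow> \<delta> \<noteq> [Xs t, Xs t] \<longrightarrow> total_occ (Gt N k t) \<delta> < total_occ (Gt N k t) [Xs t, Xs t])"
proof -
  define X where "X = Xs t"
  define q where "q i = N i div 2 ^ t" for i
  define js where "js = [2..<k+1]"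
  define c where "c = total_occ (Gt N k t) [X, X]"
  define cl where "cl = q 1 div 2 + sum_list (map (\<lambda>i. q i div 2) js)"
  define Q where "Q = q 1 + sum_list (map q js)"
  define S where "S = St N k t"
  have kin: "k \<in> set js" using k2 by (simp add: js_def)
  have ljs: "length js = k - 1" using k2 by (simp add: js_def)
  have totG: "total_occ (Gt N k t) \<delta> = nocc \<delta> S + sum_list (map (nocc \<delta>) (rules t))" for \<delta>
    by (simp add: total_occ_def Gt_def S_def)
  have Sdef: "S = useg N t 1 @ concat (map (\<lambda>i. Tb # useg N t i) js)" by (simp add: S_def St_def js_def)
  have "nocc [X,X] (useg N t 1) + nocc [X,X] (concat (map (\<lambda>i. Tb # useg N t i) js)) \<le> nocc [X,X] S"
    unfolding Sdef by (rule nocc_superadd) simp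
  moreover have "q 1 div 2 \<le> nocc [X,X] (useg N t 1)" using nocc_seg_lb unfolding q_def X_def by blast
  moreover have "sum_list (map (\<lambda>i. q i div 2) js) \<le> sum_list (map (\<lambda>i. nocc [X,X] (useg N t i)) js)"
    by (rule sum_list_mono) (use nocc_seg_lb in \<open>auto simp: q_def X_def\<close>)
  moreover have "sum_list (map (\<lambda>i. nocc [X,X] (useg N t i)) js) \<le> nocc [X,X] (concat (map (\<lambda>i. Tb # useg N t i) js))"
    by (rule nocc_segs)
  moreover have "nocc [X,X] S \<le> c" unfolding c_def totG X_def by simp
  ultimately have ccl: "cl \<le> c" unfolding cl_def by linarith
  have e: "2 * k - 1 = t + (2 * k - 1 - t)" using tk by simp
  have "(2::nat) ^ (2 * k - 1) = 2 ^ t * 2 ^ (2 * k - 1 - t)"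
    using power_add[of "2::nat" t "2 * k - 1 - t"] e by simp
  then have "2 ^ (2 * k - 1 - t) \<le> N k div 2 ^ t" using Nk
    by (metis div_le_mono nonzero_mult_div_cancel_left power_not_zero zero_neq_numeral)
  moreover have "(2::nat) ^ (k + 1) \<le> 2 ^ (2 * k - 1 - t)" using tk by (intro power_increasing) auto
  ultimately have qk: "2 ^ (k + 1) \<le> q k" unfolding q_def by linarith
  have "q k div 2 \<le> sum_list (map (\<lambda>i. q i div 2) js)" using member_le_sum[OF kin] .
  then have "q k div 2 \<le> cl" unfolding cl_def by linarith
  moreover have "(2::nat) ^ (k + 1) div 2 = 2 ^ k" by simp
  ultimately have cl2k: "2 ^ k \<le> cl" using qk div_le_mono by (metis le_trans)
  have QQ: "Q \<le> 2 * cl + k"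
  proof -
    have "sum_list (map q js) \<le> 2 * sum_list (map (\<lambda>i. q i div 2) js) + length js" by (rule sum_div2)
    moreover have "q 1 \<le> 2 * (q 1 div 2) + 1" by simp
    ultimately show ?thesis unfolding Q_def cl_def ljs using k2 by (simp add: distrib_left)
  qed
  have "q k \<le> sum_list (map q js)" by (rule member_le_sum[OF kin])
  then have Qbig: "3 * k < Q" using three_k[of k] k2 qk unfolding Q_def by linarith
  have QX: "count_list S X = Q"
    unfolding Sdef Q_def X_def q_def
    by (simp add: count_segs count_X_seg)
  have lenS: "length S \<le> Q + t + (k - 1) * (1 + t)"
  proof -
    have "length S = length (useg N t 1) + sum_list (map (\<lambda>i. Suc (length (useg N t i))) js)"
      unfolding Sdef by (simp add: length_segs)
    moreover have "length (useg N t 1) \<le> q 1 + t" using len_seg[of N t 1] count_X_seg[of N t 1] q_def by simp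
    moreover have "sum_list (map (\<lambda>i. Suc (length (useg N t i))) js) \<le> sum_list (map q js) + length js * (1 + t)"
      by (rule sum_list_le_c) (use len_seg count_X_seg in \<open>auto simp: q_def\<close>)
    ultimately show ?thesis unfolding Q_def ljs by linarith
  qed
  have "(2::nat) ^ 2 \<le> 2 ^ k" using k2 by (intro power_increasing) auto
  then have c2: "2 \<le> c" using cl2k ccl by simp
  have main: "total_occ (Gt N k t) \<delta> < c" if d2: "length \<delta> \<ge> 2" and dne: "\<delta> \<noteq> [X, X]" for \<delta>
  proof (cases "\<exists>y\<in>set \<delta>. y \<noteq> X")
    case True
    then obtain y where y: "y \<in> set \<delta>" "y \<noteq> X" by blast
    have cy: "count_list \<delta> y \<ge> 1" using y(1) count_list_0_iff[of \<delta> y] by linarith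
    have "total_occ (Gt N k t) \<delta> * count_list \<delta> y \<le> sum_list (map (\<lambda>u. count_list u y) (Gt N k t))"
      unfolding total_occ_def by (rule tot_count)
    also have "\<dots> = count_list S y + sum_list (map (\<lambda>u. count_list u y) (rules t))"
      by (simp add: Gt_def S_def)
    also have "\<dots> \<le> count_list S y + 2 * t" using sum_count_le_len[of y "rules t"] rules_len[of t] by simp
    finally have t0: "total_occ (Gt N k t) \<delta> * count_list \<delta> y \<le> count_list S y + 2 * t" .
    have "total_occ (Gt N k t) \<delta> \<le> total_occ (Gt N k t) \<delta> * count_list \<delta> y" using cy by simp
    then have t1: "total_occ (Gt N k t) \<delta> \<le> count_list S y + 2 * t" using t0 by linarith
    have t2: "count_list S y + Q \<le> length S" using count_two[OF y(2), of S] QX by simp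
    have F1: "(k - 1) * (1 + t) \<le> (k - 1) * (k - 1)" using tk by (intro mult_le_mono2) linarith
    have F2: "(k - 1) * (k - 1) + 2 * k = k * k + 1" using k2
      by (cases k) (auto simp: algebra_simps)
    have F3: "k * k + k < 2 ^ k + 5" using pow_bound[OF k2] .
    show ?thesis using t1 t2 lenS F1 F2 F3 cl2k ccl tk by linarith
  next
    case False
    then have allX: "\<forall>y\<in>set \<delta>. y = X" by blast
    then have cd: "count_list \<delta> X = length \<delta>"
      by (simp add: count_list_eq_length_filter filter_id_conv)
    have "length \<delta> \<noteq> 2"
    proof
      assume "length \<delta> = 2"
      then have "\<delta> = replicate 2 X" using replicate_length_same[of \<delta> X] allX by simp
      then show False using dne by (simp add: numeral_2_eq_2)
    qed
    then have d3: "length \<delta> \<ge> 3" using d2 by simp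
    have "total_occ (Gt N k t) \<delta> * count_list \<delta> X \<le> sum_list (map (\<lambda>u. count_list u X) (Gt N k t))"
      unfolding total_occ_def by (rule tot_count)
    also have "\<dots> = Q" using rules_X[of t] QX by (simp add: Gt_def S_def X_def)
    finally have t0: "total_occ (Gt N k t) \<delta> * count_list \<delta> X \<le> Q" .
    have "total_occ (Gt N k t) \<delta> * 3 \<le> total_occ (Gt N k t) \<delta> * count_list \<delta> X"
      using cd d3 by (intro mult_le_mono2) simp
    then have "total_occ (Gt N k t) \<delta> * 3 \<le> Q" using t0 by linarith
    then show ?thesis using QQ Qbig ccl by linarith
  qed
  show ?thesis using c2 main unfolding c_def X_def by blast
qed




lemma step_iff:
  assumes k2: "k \<ge> 2" and tk: "t + 2 \<le> k" and Nk: "N k \<ge> 2 ^ (2 * k - 1)"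
  shows "repair_step (Gt N k t) G' \<longleftrightarrow> G' = Gt N k (Suc t)"
proof -
  define g where "g = [Xs t, Xs t]"
  define G where "G = Gt N k t"
  have K: "2 \<le> total_occ G g" "\<And>\<delta>. length \<delta> \<ge> 2 \<Longrightarrow> \<delta> \<noteq> g \<Longrightarrow> total_occ G \<delta> < total_occ G g"
    using key[of k t N, OF k2 tk Nk] unfolding g_def G_def by auto
  have mg: "maximal_string G g"
    unfolding maximal_string_def
  proof (intro conjI)
    show "2 \<le> length g" by (simp add: g_def)
    show "2 \<le> total_occ G g" by (rule K(1))
    show "\<not> (\<exists>\<delta>. length g < length \<delta> \<and> total_occ G g \<le> total_occ G \<delta>)"
    proof
      assume "\<exists>\<delta>. length g < length \<delta> \<and> total_occ G g \<le> total_occ G \<delta>"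
      then obtain \<delta> where d: "length g < length \<delta>" "total_occ G g \<le> total_occ G \<delta>" by blast
      have "length \<delta> \<ge> 2" "\<delta> \<noteq> g" using d(1) by (auto simp: g_def)
      then show False using K(2) d(2) by fastforce
    qed
  qed
  have uniq: "\<gamma> = g" if "maximal_string G \<gamma>" "\<forall>\<delta>. maximal_string G \<delta> \<longrightarrow> total_occ G \<delta> \<le> total_occ G \<gamma>" for \<gamma>
  proof (rule ccontr)
    assume ne: "\<gamma> \<noteq> g"
    have "length \<gamma> \<ge> 2" using that(1) unfolding maximal_string_def by blast
    then have "total_occ G \<gamma> < total_occ G g" using K(2) ne by blast
    moreover have "total_occ G g \<le> total_occ G \<gamma>" using that(2) mg by blast
    ultimately show False by simp
  qed
  have dom: "\<forall>\<delta>. maximal_string G \<delta> \<longrightarrow> total_occ G \<delta> \<le> total_occ G g"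
  proof (intro allI impI)
    fix \<delta> assume "maximal_string G \<delta>"
    then have "length \<delta> \<ge> 2" unfolding maximal_string_def by blast
    then show "total_occ G \<delta> \<le> total_occ G g" using K(2)[of \<delta>] by (cases "\<delta> = g") auto
  qed
  have res: "map (repl g (NT (length G))) G @ [g] = Gt N k (Suc t)"
    unfolding g_def G_def by (rule step_Gt)
  show ?thesis
  proof
    assume "repair_step (Gt N k t) G'"
    then obtain \<gamma> where \<gamma>: "maximal_string G \<gamma>" "\<forall>\<delta>. maximal_string G \<delta> \<longrightarrow> total_occ G \<delta> \<le> total_occ G \<gamma>"
      "G' = map (repl \<gamma> (NT (length G))) G @ [\<gamma>]"
      unfolding repair_step_def G_def by blast
    then have "\<gamma> = g" using uniq by blast
    then show "G' = Gt N k (Suc t)" using \<gamma>(3) res by simp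
  next
    assume "G' = Gt N k (Suc t)"
    then show "repair_step (Gt N k t) G'" unfolding repair_step_def G_def[symmetric]
      using mg dom res by (intro exI[of _ g]) simp
  qed
qed

lemma iter:
  assumes k2: "k \<ge> 2" and Nk: "N k \<ge> 2 ^ (2 * k - 1)"
  shows "n \<le> k - 1 \<Longrightarrow> (repair_step ^^ n) (Gt N k 0) G \<longleftrightarrow> G = Gt N k n"
proof (induction n arbitrary: G)
  case 0 then show ?case by auto
next
  case (Suc n)
  have tk: "n + 2 \<le> k" using Suc.prems k2 by linarith
  have "(repair_step ^^ Suc n) (Gt N k 0) G \<longleftrightarrow> (\<exists>H. (repair_step ^^ n) (Gt N k 0) H \<and> repair_step H G)"
    by (simp add: relpowp_Suc_right OO_def)
  also have "\<dots> \<longleftrightarrow> repair_step (Gt N k n) G" using Suc.IH Suc.prems by auto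
  also have "\<dots> \<longleftrightarrow> G = Gt N k (Suc n)" by (rule step_iff[of k n N, OF k2 tk Nk])
  finally show ?case .
qed




lemma foldl_bv: fixes n :: nat shows "foldl (\<lambda>n b. 2 * n + (if b then 1 else 0)) n xs
   = n * 2 ^ length xs + foldl (\<lambda>n b. 2 * n + (if b then 1 else 0)) 0 xs"
proof (induction xs arbitrary: n)
  case Nil then show ?case by simp
next
  case (Cons a xs)
  have "foldl (\<lambda>n b. 2 * n + (if b then 1 else 0)) n (a # xs)
      = foldl (\<lambda>n b. 2 * n + (if b then 1 else 0)) (2 * n + (if a then 1 else 0)) xs" by simp
  also have "\<dots> = (2 * n + (if a then 1 else 0)) * 2 ^ length xs + foldl (\<lambda>n b. 2 * n + (if b then 1 else 0)) 0 xs"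
    by (rule Cons.IH)
  also have "foldl (\<lambda>n b. 2 * n + (if b then 1 else 0)) (0::nat) (a # xs)
      = (if a then 1 else 0) * 2 ^ length xs + foldl (\<lambda>n b. 2 * n + (if b then 1 else 0)) 0 xs"
    using Cons.IH[of "if a then 1 else 0"] by simp
  ultimately show ?case by (simp add: algebra_simps)
qed

lemma bin_val_True: "bin_val (True # ys) \<ge> 2 ^ length ys"
proof -
  have e: "bin_val (True # ys) = foldl (\<lambda>n b. 2 * n + (if b then 1 else 0)) (1::nat) ys"
    by (simp add: bin_val_def)
  show ?thesis using foldl_bv[of 1 ys] e by linarith
qed

lemma bin_val_snoc: "bin_val (xs @ [b]) = 2 * bin_val xs + (if b then 1 else 0)"
  by (simp add: bin_val_def)

lemma bin_val_bit: "j < length xs \<Longrightarrow> odd (bin_val xs div 2 ^ j) = xs ! (length xs - 1 - j)"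
proof (induction xs arbitrary: j rule: rev_induct)
  case Nil then show ?case by simp
next
  case (snoc b xs)
  show ?case
  proof (cases j)
    case 0 then show ?thesis by (simp add: bin_val_snoc)
  next
    case (Suc j')
    have "bin_val (xs @ [b]) div 2 ^ j = (bin_val (xs @ [b]) div 2) div 2 ^ j'"
      using Suc by (simp add: div_mult2_eq)
    also have "bin_val (xs @ [b]) div 2 = bin_val xs" by (simp add: bin_val_snoc)
    finally have e: "bin_val (xs @ [b]) div 2 ^ j = bin_val xs div 2 ^ j'" .
    have j': "j' < length xs" using snoc.prems Suc by simp
    have "(xs @ [b]) ! (length (xs @ [b]) - 1 - j) = xs ! (length xs - 1 - j')"
    proof -
      have "length xs - Suc j' < length xs" using j' by simp
      then show ?thesis using Suc by (simp add: nth_append)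
    qed
    then show ?thesis using e snoc.IH[OF j'] by simp
  qed
qed

lemma hmor_len: "length (hmor xs) = 2 * length xs"
  by (induction xs) (auto simp: hmor_def)

lemma hmor_Cons_True: "hmor (True # xs) = True # False # hmor xs"
  by (simp add: hmor_def)

lemma len_B:
  assumes k2: "k \<ge> 2" and db: "de_bruijn_seq (nat \<lceil>log 2 (real k)\<rceil>) B"
  shows "k \<le> length B"
proof -
  define m where "m = nat \<lceil>log 2 (real k)\<rceil>"
  have lB: "length B = 2 ^ m" using db unfolding de_bruijn_seq_def m_def by simp
  have kpos: "real k > 0" using k2 by simp
  have "log 2 (real k) \<ge> 0" using k2 by simp
  then have "log 2 (real k) \<le> real m" unfolding m_def by linarith
  then have "2 powr (log 2 (real k)) \<le> 2 powr (real m)" by simp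
  then have "real k \<le> 2 powr (real m)" using kpos by simp
  also have "\<dots> = real (2 ^ m)" by (simp add: powr_realpow)
  finally show ?thesis using lB by linarith
qed

context
  fixes k :: nat and B :: "bool list"
  assumes k2: "k \<ge> 2" and db: "de_bruijn_seq (nat \<lceil>log 2 (real k)\<rceil>) B"
begin

lemma wstruct: "\<exists>r. w_word k B = True # r \<and> length (w_word k B) = 2 * k"
proof -
  have lB: "k \<le> length B" by (rule len_B[OF k2 db])
  have hB: "B \<noteq> [] \<and> hd B = True" using db unfolding de_bruijn_seq_def by simp
  then obtain B' where B: "B = True # B'" by (cases B) auto
  obtain k' where k: "k = Suc k'" using k2 by (cases k) auto
  have "w_word k B = True # False # hmor (take k' B')" by (simp add: w_word_def B k hmor_Cons_True)
  moreover have "length (w_word k B) = 2 * k" using lB by (simp add: w_word_def hmor_len)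
  ultimately show ?thesis by blast
qed

lemma N_lb: "1 \<le> i \<Longrightarrow> i \<le> k \<Longrightarrow> 2 ^ (k + i - 1) \<le> Nval k B i"
proof -
  assume i: "1 \<le> i" "i \<le> k"
  obtain r where r: "w_word k B = True # r" "length (w_word k B) = 2 * k" using wstruct by blast
  have "take (k + i) (w_word k B) = True # take (k + i - 1) r"
    using i by (simp add: r(1) take_Cons')
  moreover have "length (take (k + i - 1) r) = k + i - 1" using r i by simp
  ultimately show ?thesis unfolding Nval_def using bin_val_True[of "take (k + i - 1) r"] by simp
qed

lemma tail_vword: "1 \<le> i \<Longrightarrow> i \<le> k \<Longrightarrow> tailw (Nval k B) (k - 1) i = vword k B i"
proof -
  assume i: "1 \<le> i" "i \<le> k"
  obtain r where r: "w_word k B = True # r" "length (w_word k B) = 2 * k" using wstruct by blast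
  define w where "w = w_word k B"
  have "map (\<lambda>j. fsym j (odd (Nval k B i div 2 ^ j))) (rev [0..<k-1])
      = map (\<lambda>p. fsym (k + i - p) (w ! (p - 1))) [i+2..<k+i+1]"
  proof (rule nth_equalityI)
    show "length (map (\<lambda>j. fsym j (odd (Nval k B i div 2 ^ j))) (rev [0..<k-1])) =
          length (map (\<lambda>p. fsym (k + i - p) (w ! (p - 1))) [i+2..<k+i+1])" using k2 by simp
    fix m assume "m < length (map (\<lambda>j. fsym j (odd (Nval k B i div 2 ^ j))) (rev [0..<k-1]))"
    then have m: "m < k - 1" by simp
    have "rev [0..<k-1] ! m = [0..<k-1] ! (k - 1 - Suc m)" using m by (simp add: rev_nth)
    moreover have "k - 1 - Suc m = k - 2 - m" by simp
    moreover have "[0..<k-1] ! (k - 2 - m) = k - 2 - m" using m by simp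
    ultimately have l: "rev [0..<k-1] ! m = k - 2 - m" by simp
    have r2: "[i+2..<k+i+1] ! m = i + 2 + m" using m by (subst nth_upt) auto
    have lt: "length (take (k + i) w) = k + i" using r i by (simp add: w_def)
    have lw: "length w = 2 * k" using r by (simp add: w_def)
    have "odd (Nval k B i div 2 ^ (k - 2 - m)) = take (k + i) w ! (k + i - 1 - (k - 2 - m))"
      unfolding Nval_def w_def[symmetric] using bin_val_bit[of "k - 2 - m" "take (k + i) w"] lt m i lw by simp
    also have "\<dots> = w ! (i + 1 + m)" using m i by simp
    finally have b: "odd (Nval k B i div 2 ^ (k - 2 - m)) = w ! (i + 1 + m)" .
    show "map (\<lambda>j. fsym j (odd (Nval k B i div 2 ^ j))) (rev [0..<k-1]) ! m =
          map (\<lambda>p. fsym (k + i - p) (w ! (p - 1))) [i+2..<k+i+1] ! m"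
    proof -
      have ml: "m < length (rev [0..<k-1])" using m by simp
      have mr: "m < length [i+2..<k+i+1]" using m by (simp del: upt_Suc)
      have e1: "map (\<lambda>j. fsym j (odd (Nval k B i div 2 ^ j))) (rev [0..<k-1]) ! m
           = fsym (k - 2 - m) (odd (Nval k B i div 2 ^ (k - 2 - m)))"
        using nth_map[OF ml, of "\<lambda>j. fsym j (odd (Nval k B i div 2 ^ j))"] l by simp
      have e2: "map (\<lambda>p. fsym (k + i - p) (w ! (p - 1))) [i+2..<k+i+1] ! m
           = fsym (k + i - (i + 2 + m)) (w ! (i + 2 + m - 1))"
        using nth_map[OF mr, of "\<lambda>p. fsym (k + i - p) (w ! (p - 1))"] r2 by (simp del: upt_Suc)
      have e3: "k + i - (i + 2 + m) = k - 2 - m" "i + 2 + m - 1 = i + 1 + m" by simp_all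
      show ?thesis unfolding e1 e2 e3 b ..
    qed
  qed
  then show ?thesis unfolding tailw_def vword_def w_def by simp
qed

lemma G0: "Gt (Nval k B) k 0 = [s_word k B]"
  by (simp add: Gt_def St_def useg_def tailw_def Xs_def rules_def s_word_def)

lemma Gfinal: "Gt (Nval k B) k (k - 1) = expected_slp k B"
proof -
  have Xk: "Xs (k - 1) = NT (k - 1)" using k2 by (simp add: Xs_def)
  have u: "useg (Nval k B) (k - 1) i = uword k B i" if "1 \<le> i" "i \<le> k" for i
    using tail_vword[OF that] Xk by (simp add: useg_def uword_def qval_def)
  have m: "map (\<lambda>i. Tb # useg (Nval k B) (k - 1) i) [2..<k+1] = map (\<lambda>i. Tb # uword k B i) [2..<k+1]"
  proof (rule map_cong[OF refl])
    fix i assume "i \<in> set [2..<k+1]"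
    then have "1 \<le> i" "i \<le> k" by (simp_all del: upt_Suc)
    then show "Tb # useg (Nval k B) (k - 1) i = Tb # uword k B i" using u by simp
  qed
  have S: "St (Nval k B) k (k - 1) = uword k B 1 @ concat (map (\<lambda>i. Tb # uword k B i) [2..<k+1])"
    unfolding St_def m using u[of 1] k2 by simp
  have up: "[1..<k] = 1 # [2..<k]" using k2 upt_rec[of 1 k] by (simp add: numeral_2_eq_2)
  have m2: "map (\<lambda>j. [Xs (j - 1), Xs (j - 1)]) [2..<k] = map (\<lambda>i. [NT (i - 1), NT (i - 1)]) [2..<k]"
  proof (rule map_cong[OF refl])
    fix i assume "i \<in> set [2..<k]"
    then have "i \<ge> 2" by simp
    then show "[Xs (i - 1), Xs (i - 1)] = [NT (i - 1), NT (i - 1)]" by (simp add: Xs_def)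
  qed
  have R: "rules (k - 1) = [Ta, Ta] # map (\<lambda>i. [NT (i - 1), NT (i - 1)]) [2..<k]"
  proof -
    have "rules (k - 1) = map (\<lambda>j. [Xs (j - 1), Xs (j - 1)]) [1..<k]"
      unfolding rules_def using k2 by simp
    also have "\<dots> = [Xs 0, Xs 0] # map (\<lambda>j. [Xs (j - 1), Xs (j - 1)]) [2..<k]"
      unfolding up by simp
    finally show ?thesis unfolding m2 by (simp add: Xs_def)
  qed
  show ?thesis unfolding Gt_def expected_slp_def S R ..
qed

end

theorem mainTheorem4:
  fixes k :: nat and B :: "bool list"
  assumes "k \<ge> 2"
    and "de_bruijn_seq (nat \<lceil>log 2 (real k)\<rceil>) B"
  shows "(\<forall>G. (repair_step ^^ (k - 1)) [s_word k B] G \<longleftrightarrow> G = expected_slp k B) \<and>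
         (\<forall>i\<in>{1..k}. qval k B i \<ge> 2)"
proof
  have Nk: "2 ^ (2 * k - 1) \<le> Nval k B k" using N_lb[OF assms, of k] assms(1) by (simp add: mult_2)
  show "\<forall>G. (repair_step ^^ (k - 1)) [s_word k B] G \<longleftrightarrow> G = expected_slp k B"
    using iter[of k "Nval k B" "k - 1", OF assms(1) Nk] G0[OF assms] Gfinal[OF assms] by simp
  show "\<forall>i\<in>{1..k}. qval k B i \<ge> 2"
  proof
    fix i assume i: "i \<in> {1..k}"
    have "2 ^ (k + i - 1) \<le> Nval k B i" using N_lb[OF assms] i by simp
    moreover have "(2::nat) ^ (k + i - 1) = 2 ^ (k - 1) * 2 ^ i" using i assms(1)
      by (simp add: power_add[symmetric])
    ultimately have "2 ^ (k - 1) * 2 ^ i div 2 ^ (k - 1) \<le> Nval k B i div 2 ^ (k - 1)"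
      by (metis div_le_mono)
    then have "2 ^ i \<le> Nval k B i div 2 ^ (k - 1)" by simp
    moreover have "(2::nat) \<le> 2 ^ i" using i power_increasing[of 1 i "2::nat"] by simp
    ultimately show "qval k B i \<ge> 2" unfolding qval_def by linarith
  qed
qed


end
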